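(* Let $\mathcal F$ be a filtration sequence, $r=(r_m)_{m\in\mathbb N}$ an extended integer sequence, and $E=(E_{m,n})_{m,n\in\mathbb N}$ an $r$-asymptotic e-process for $\mathcal P$ and $\mathcal F$. Then for every $\alpha\in(0,1)$, $$\limsup_{m\to\infty}\sup_{P\in\mathcal P}P\Big[\sup_{n\in\mathbb N,\ n\le r_m}E_{m,n}\ge \tfrac1\alpha\Big]\le\alpha .$$
   Context: $(\Omega,\mathcal A)$ is a measurable space, $\mathcal P$ a set of probability measures on it, $\mathbb N=\{0,1,\dots\}$; extended integers are elements of $\mathbb N\cup\{\infty\}$. Nonnegative random variables take values in $[0,\infty]$ with $\mathbb E_P[X]:=\infty$ if not $P$-integrable; $X_\infty:=\limsup_nX_n$. A filtration sequence is a family $(\mathcal F_{m,n})_{m,n\in\mathbb N}$ of sub-$\sigma$-algebras with each $\mathcal F_{m,\bullet}$ a filtration; adapted means $E_{m,n}$ is $\mathcal F_{m,n}$-measurable. For a filtration $\mathcal G$ and $\rho\in\mathbb N\cup\{\infty\}$, $\mathcal T(\rho,\mathcal G,\mathcal P)$ is the set of $\mathcal G$-stopping times $\tau$ (values in $\mathbb N\cup\{\infty\}$) with $P[\tau\le\rho]=1$ for all $P\in\mathcal P$; $\mathcal T(r,\mathcal F,\mathcal P)$ is the set of sequences $(\tau_m)$ with $\tau_m\in\mathcal T(r_m,\mathcal F_{m,\bullet},\mathcal P)$. A nonnegative adapted $E$ is an $r$-asymptotic e-process if for every $\tau\in\mathcal T(r,\mathcal F,\mathcal P)$, $\limsup_m\sup_{P\in\mathcal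 P}\mathbb E_P[E_{m,\tau_m}]\le 1$. *)

theory Defs
  imports "HOL-Probability.Probability" "HOL-Library.Extended_Nat"
begin

definition prob_measures_on :: "'a measure \<Rightarrow> 'a measure set \<Rightarrow> bool" where
  "prob_measures_on M Ps \<longleftrightarrow> (\<forall>P\<in>Ps. prob_space P \<and> sets P = sets M)"

definition filtration_sequence :: "'a measure \<Rightarrow> (nat \<Rightarrow> nat \<Rightarrow> 'a measure) \<Rightarrow> bool" where
  "filtration_sequence M F \<longleftrightarrow>
     (\<forall>m n. subalgebra M (F m n)) \<and>
     (\<forall>m n n'. n \<le> n' \<longrightarrow> sets (F m n) \<subseteq> sets (F m n'))"

definition adapted_seq :: "(nat \<Rightarrow> nat \<Rightarrow> 'a measure) \<Rightarrow> (nat \<Rightarrow> nat \<Rightarrow> 'a \<Rightarrow> ennreal) \<Rightarrow> bool" where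
  "adapted_seq F E \<longleftrightarrow> (\<forall>m n. E m n \<in> borel_measurable (F m n))"

definition stopping_times_bounded ::
  "'a measure \<Rightarrow> enat \<Rightarrow> (nat \<Rightarrow> 'a measure) \<Rightarrow> 'a measure set \<Rightarrow> ('a \<Rightarrow> enat) set" where
  "stopping_times_bounded M \<rho> G Ps =
     {\<tau>. (\<forall>n. {\<omega>\<in>space M. \<tau> \<omega> \<le> enat n} \<in> sets (G n)) \<and>
          (\<forall>P\<in>Ps. AE \<omega> in P. \<tau> \<omega> \<le> \<rho>)}"

definition stopping_time_seqs ::
  "'a measure \<Rightarrow> (nat \<Rightarrow> enat) \<Rightarrow> (nat \<Rightarrow> nat \<Rightarrow> 'a measure) \<Rightarrow> 'a measure set \<Rightarrow> (nat \<Rightarrow> 'a \<Rightarrow> enat) set" where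
  "stopping_time_seqs M r F Ps = {\<tau>. \<forall>m. \<tau> m \<in> stopping_times_bounded M (r m) (F m) Ps}"

definition stopped_at :: "(nat \<Rightarrow> 'a \<Rightarrow> ennreal) \<Rightarrow> ('a \<Rightarrow> enat) \<Rightarrow> 'a \<Rightarrow> ennreal" where
  "stopped_at X \<tau> \<omega> = (case \<tau> \<omega> of enat n \<Rightarrow> X n \<omega> | \<infinity> \<Rightarrow> limsup (\<lambda>n. X n \<omega>))"

(* r-asymptotic e-process; expectations are nonnegative integrals (= infinity if not integrable). *)
definition asymptotic_e_process ::
  "'a measure \<Rightarrow> 'a measure set \<Rightarrow> (nat \<Rightarrow> nat \<Rightarrow> 'a measure) \<Rightarrow> (nat \<Rightarrow> enat) \<Rightarrow>
   (nat \<Rightarrow> nat \<Rightarrow> 'a \<Rightarrow> ennreal) \<Rightarrow> bool" where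
  "asymptotic_e_process M Ps F r E \<longleftrightarrow>
     adapted_seq F E \<and>
     (\<forall>\<tau>\<in>stopping_time_seqs M r F Ps.
        limsup (\<lambda>m. SUP P\<in>Ps. (\<integral>\<^sup>+ \<omega>. stopped_at (E m) (\<tau> m) \<omega> \<partial>P)) \<le> 1)"

end

theory Submission
  imports Defs
begin

lemma limsup_cmult_ennreal:
  fixes g :: "nat \<Rightarrow> ennreal" and y :: real
  shows "limsup (\<lambda>m. ennreal y * g m) = ennreal y * limsup g"
proof (rule Limsup_compose_continuous_mono[where f="\<lambda>x. ennreal y * x"])
  show "continuous_on UNIV ((*) (ennreal y))"
    by (rule ennreal_continuous_on_cmult) (auto intro: continuous_on_id)
  show "mono ((*) (ennreal y))" by (auto simp: mono_def mult_left_mono)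
qed simp

theorem mainTheorem9:
  fixes M :: "'a measure" and Ps :: "'a measure set"
    and F :: "nat \<Rightarrow> nat \<Rightarrow> 'a measure" and r :: "nat \<Rightarrow> enat"
    and E :: "nat \<Rightarrow> nat \<Rightarrow> 'a \<Rightarrow> ennreal" and \<alpha> :: real
  assumes "prob_measures_on M Ps"
    and "filtration_sequence M F"
    and "asymptotic_e_process M Ps F r E"
    and "0 < \<alpha>" and "\<alpha> < 1"
  shows "limsup (\<lambda>m. SUP P\<in>Ps.
            emeasure P {\<omega>\<in>space P. (SUP n\<in>{n. enat n \<le> r m}. E m n \<omega>) \<ge> ennreal (1 / \<alpha>)})
         \<le> ennreal \<alpha>"
proof -
  have sub: "subalgebra M (F m n)" for m n using assms(2) by (simp add: filtration_sequence_def)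
  have mono: "n \<le> n' \<Longrightarrow> sets (F m n) \<subseteq> sets (F m n')" for m n n'
    using assms(2) by (simp add: filtration_sequence_def)
  have spF: "space (F m n) = space M" for m n using sub by (simp add: subalgebra_def)
  have Emeas: "E m n \<in> borel_measurable (F m n)" for m n
    using assms(3) by (simp add: asymptotic_e_process_def adapted_seq_def)
  have EmeasM: "E m n \<in> borel_measurable M" for m n
    using measurable_from_subalg[OF sub Emeas] .
  define f where "f m = (SUP P\<in>Ps.
            emeasure P {\<omega>\<in>space P. (SUP n\<in>{n. enat n \<le> r m}. E m n \<omega>) \<ge> ennreal (1 / \<alpha>)})" for m
  have key: "limsup f \<le> ennreal y" if y: "\<alpha> < y" for y :: real
  proof -
    define c where "c = 1 / y"
    have ypos: "0 < y" using y assms(4) by simp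
    have cpos: "0 < c" using ypos by (simp add: c_def)
    have cless: "ennreal c < ennreal (1/\<alpha>)"
      using y assms(4) cpos by (simp add: c_def ennreal_less_iff frac_less2)
    define hit where "hit m \<omega> = (if \<exists>n. ennreal c < E m n \<omega>
        then enat (LEAST n. ennreal c < E m n \<omega>) else \<infinity>)" for m \<omega>
    define \<tau> where "\<tau> m \<omega> = min (hit m \<omega>) (r m)" for m \<omega>
    have tau_le: "(\<tau> m \<omega> \<le> enat n) \<longleftrightarrow> (\<exists>k\<le>n. ennreal c < E m k \<omega>) \<or> r m \<le> enat n" for m \<omega> n
    proof -
      have "(hit m \<omega> \<le> enat n) \<longleftrightarrow> (\<exists>k\<le>n. ennreal c < E m k \<omega>)"
      proof
        assume h: "hit m \<omega> \<le> enat n"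
        then have ex: "\<exists>n. ennreal c < E m n \<omega>" by (auto simp: hit_def split: if_splits)
        then have "ennreal c < E m (LEAST n. ennreal c < E m n \<omega>) \<omega>" by (rule LeastI_ex)
        moreover have "(LEAST n. ennreal c < E m n \<omega>) \<le> n" using h ex by (simp add: hit_def)
        ultimately show "\<exists>k\<le>n. ennreal c < E m k \<omega>" by blast
      next
        assume "\<exists>k\<le>n. ennreal c < E m k \<omega>"
        then obtain k where k: "k \<le> n" "ennreal c < E m k \<omega>" by blast
        then have "(LEAST n. ennreal c < E m n \<omega>) \<le> k" by (intro Least_le)
        then show "hit m \<omega> \<le> enat n" using k by (auto simp: hit_def)
      qed
      then show ?thesis by (simp add: \<tau>_def min_le_iff_disj)
    qed
    have tau_in: "\<tau> \<in> stopping_time_seqs M r F Ps"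
      unfolding stopping_time_seqs_def stopping_times_bounded_def
    proof (intro CollectI allI conjI ballI)
      fix m n
      have eq: "{\<omega>\<in>space M. \<tau> m \<omega> \<le> enat n} =
          (\<Union>k\<in>{..n}. {\<omega>\<in>space (F m k). ennreal c < E m k \<omega>}) \<union>
          (if r m \<le> enat n then space (F m n) else {})"
        by (auto simp: tau_le spF)
      have "{\<omega>\<in>space (F m k). ennreal c < E m k \<omega>} \<in> sets (F m n)" if "k \<in> {..n}" for k
        using mono[of k n m] that Emeas[of m k] by auto
      then show "{\<omega>\<in>space M. \<tau> m \<omega> \<le> enat n} \<in> sets (F m n)"
        unfolding eq by auto
    next
      fix m P assume "P \<in> Ps"
      show "AE \<omega> in P. \<tau> m \<omega> \<le> r m" by (simp add: \<tau>_def)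
    qed
    define g where "g m = (SUP P\<in>Ps. (\<integral>\<^sup>+ \<omega>. stopped_at (E m) (\<tau> m) \<omega> \<partial>P))" for m
    have glim: "limsup g \<le> 1"
    proof -
      have "g = (\<lambda>m. SUP P\<in>Ps. (\<integral>\<^sup>+ \<omega>. stopped_at (E m) (\<tau> m) \<omega> \<partial>P))"
        by (simp add: fun_eq_iff g_def)
      then show ?thesis using assms(3) tau_in by (simp add: asymptotic_e_process_def)
    qed
    have fg: "f m \<le> ennreal y * g m" for m
      unfolding f_def
    proof (rule SUP_least)
      fix P assume P: "P \<in> Ps"
      have setsP: "sets P = sets M" using assms(1) P by (simp add: prob_measures_on_def)
      have spP: "space P = space M" using sets_eq_imp_space_eq[OF setsP] .
      define A where "A = (\<Union>n. {\<omega>\<in>space M. enat n \<le> r m \<and> ennreal c < E m n \<omega>})"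
      have AM: "A \<in> sets M" unfolding A_def
      proof (intro sets.countable_UN subsetI)
        fix X assume "X \<in> range (\<lambda>x. {\<omega> \<in> space M. enat x \<le> r m \<and> ennreal c < E m x \<omega>})"
        then obtain x where X: "X = {\<omega> \<in> space M. enat x \<le> r m \<and> ennreal c < E m x \<omega>}" by blast
        have "{\<omega> \<in> space M. ennreal c < E m x \<omega>} \<in> sets M"
          using EmeasM[of m x] by measurable
        then show "X \<in> sets M" unfolding X by (cases "enat x \<le> r m") auto
      qed
      have AP: "A \<in> sets P" using AM setsP by simp
      have sub1: "{\<omega>\<in>space P. (SUP n\<in>{n. enat n \<le> r m}. E m n \<omega>) \<ge> ennreal (1 / \<alpha>)} \<subseteq> A"
      proof
        fix \<omega> assume "\<omega> \<in> {\<omega>\<in>space P. (SUP n\<in>{n. enat n \<le> r m}. E m n \<omega>) \<ge> ennreal (1 / \<alpha>)}"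
        then have "\<omega> \<in> space M" "ennreal c < (SUP n\<in>{n. enat n \<le> r m}. E m n \<omega>)"
          using cless spP by auto
        then show "\<omega> \<in> A" by (auto simp: A_def less_SUP_iff)
      qed
      have pt: "ennreal c * indicator A \<omega> \<le> stopped_at (E m) (\<tau> m) \<omega>" for \<omega>
      proof (cases "\<omega> \<in> A")
        case True
        then obtain n where n: "enat n \<le> r m" "ennreal c < E m n \<omega>" by (auto simp: A_def)
        let ?L = "LEAST n. ennreal c < E m n \<omega>"
        have L: "ennreal c < E m ?L \<omega>" using n by (intro LeastI)
        have "?L \<le> n" using n by (intro Least_le)
        then have "enat ?L \<le> r m" using n(1) by (meson enat_ord_simps(1) order_trans)
        then have "\<tau> m \<omega> = enat ?L" using n by (auto simp: \<tau>_def hit_def min_def)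
        then show ?thesis using True L by (simp add: stopped_at_def)
      qed simp
      have "emeasure P {\<omega>\<in>space P. (SUP n\<in>{n. enat n \<le> r m}. E m n \<omega>) \<ge> ennreal (1 / \<alpha>)}
          \<le> emeasure P A" using sub1 AP by (intro emeasure_mono)
      also have "\<dots> = ennreal y * (ennreal c * emeasure P A)"
        using ypos by (simp add: c_def mult.assoc[symmetric] ennreal_mult[symmetric])
      also have "ennreal c * emeasure P A = (\<integral>\<^sup>+ \<omega>. ennreal c * indicator A \<omega> \<partial>P)"
        using AP by (simp add: nn_integral_cmult_indicator)
      also have "\<dots> \<le> (\<integral>\<^sup>+ \<omega>. stopped_at (E m) (\<tau> m) \<omega> \<partial>P)"
        by (intro nn_integral_mono pt)
      also have "\<dots> \<le> g m" unfolding g_def using P by (intro SUP_upper)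
      finally show "emeasure P {\<omega>\<in>space P. (SUP n\<in>{n. enat n \<le> r m}. E m n \<omega>) \<ge> ennreal (1 / \<alpha>)}
          \<le> ennreal y * g m" by (simp add: mult_left_mono)
    qed
    have "limsup f \<le> limsup (\<lambda>m. ennreal y * g m)"
      by (intro Limsup_mono) (simp add: fg)
    also have "\<dots> = ennreal y * limsup g" by (rule limsup_cmult_ennreal)
    also have "\<dots> \<le> ennreal y * 1" by (intro mult_left_mono glim) simp
    finally show ?thesis by simp
  qed
  have "limsup f \<le> ennreal \<alpha>"
  proof (rule ennreal_le_epsilon)
    fix e :: real assume "0 < e"
    then have "limsup f \<le> ennreal (\<alpha> + e)" by (intro key) simp
    then show "limsup f \<le> ennreal \<alpha> + ennreal e"
      using \<open>0 < e\<close> assms(4) by (simp add: ennreal_plus)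
  qed
  moreover have "f = (\<lambda>m. SUP P\<in>Ps.
            emeasure P {\<omega>\<in>space P. (SUP n\<in>{n. enat n \<le> r m}. E m n \<omega>) \<ge> ennreal (1 / \<alpha>)})"
    by (simp add: fun_eq_iff f_def)
  ultimately show ?thesis by simp
qed

end
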